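(* Let $(\mathfrak{g},[\cdot,\ldots,\cdot],\varepsilon,\alpha)$ be an $n$-Hom-Lie color algebra and $\mathcal{N}$ a Nijenhuis operator on it. For $\lambda\in\mathbb{K}$ define $$[x_1,\ldots,x_n]_\lambda=[x_1,\ldots,x_n]+\sum_{i=1}^{n-1}\lambda^i[x_1,\ldots,x_n]^i_{\mathcal{N}}.$$ Then this bracket defines a deformation of $\mathfrak{g}$ (i.e. $(\mathfrak{g},[\cdot,\ldots,\cdot]_\lambda,\varepsilon,\alpha)$ is an $n$-Hom-Lie color algebra) which is infinitesimally trivial: $\mathcal{T}_\lambda=\mathrm{id}+\lambda\mathcal{N}$ satisfies $\mathcal{T}_\lambda\circ\alpha=\alpha\circ\mathcal{T}_\lambda$ and $\mathcal{T}_\lambda([x_1,\ldots,x_n]_\lambda)=[\mathcal{T}_\lambda(x_1),\ldots,\mathcal{T}_\lambda(x_n)]$ for all $x_1,\ldots,x_n\in\mathfrak{g}$.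
   Context: $\mathbb{K}$ is a field of characteristic zero and $\Gamma$ an abelian group. A bicharacter is a map $\varepsilon:\Gamma\times\Gamma\to\mathbb{K}\setminus\{0\}$ with $\varepsilon(a,b)\varepsilon(b,a)=1$, $\varepsilon(a,b+c)=\varepsilon(a,b)\varepsilon(a,c)$, $\varepsilon(a+b,c)=\varepsilon(a,c)\varepsilon(b,c)$. For homogeneous $x,y$, $\varepsilon(x,y)=\varepsilon(|x|,|y|)$ and $\varepsilon(x,y_1+\dots+y_k)=\varepsilon(|x|,|y_1|+\dots+|y_k|)$ ($=1$ for an empty sum). An $n$-Hom-Lie color algebra $(\mathfrak{g},[\cdot,\ldots,\cdot],\varepsilon,\alpha)$ is a $\Gamma$-graded vector space with an $n$-linear bracket of degree zero, a bicharacter $\varepsilon$ and a degree-zero linear map $\alpha$ such that for homogeneous elements: (i) $[x_1,\ldots,x_i,x_{i+1},\ldots,x_n]=-\varepsilon(x_i,x_{i+1})[x_1,\ldots,x_{i+1},x_i,\ldots,x_n]$; (ii) $[\alpha(x_1),\ldots,\alpha(x_{n-1}),[y_1,\ldots,y_n]]=\sum_{i=1}^n\varepsilon(x_1+\dots+x_{n-1},y_1+\dots+y_{i-1})[\alpha(y_1),\ldots,\alpha(y_{i-1}),[x_1,\ldots,x_{n-1},y_i],\alpha(y_{i+1}),\ldots,\alpha(y_n)]$. For a degree-zero linear map $\mathcal{N}:\mathfrak{g}\to\mathfrak{g}$ define $[\cdot,\ldots,\cdot]^0_{\mathcal{N}}=[\cdot,\ldots,\cdot]$ and for $1\le j\le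 n-1$: $[x_1,\ldots,x_n]^j_{\mathcal{N}}=\sum_{i_1<\dots<i_j}[x_1,\ldots,\mathcal{N}x_{i_1},\ldots,\mathcal{N}x_{i_j},\ldots,x_n]-\mathcal{N}([x_1,\ldots,x_n]^{j-1}_{\mathcal{N}})$, where the sum applies $\mathcal{N}$ exactly to the entries in positions $i_1,\ldots,i_j$. $\mathcal{N}$ is a Nijenhuis operator if $\mathcal{N}\circ\alpha=\alpha\circ\mathcal{N}$ and $[\mathcal{N}x_1,\ldots,\mathcal{N}x_n]=\mathcal{N}([x_1,\ldots,x_n]^{n-1}_{\mathcal{N}})$ for all $x_i$. *)

theory Defs
  imports Main
begin

text \<open>The underlying K-vector space is a type 'v with a scalar multiplication
  scale :: 'k \<Rightarrow> 'v \<Rightarrow> 'v satisfying vector_space scale, 'k a field of char 0.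
  The Gamma-grading is a family G :: 'g \<Rightarrow> 'v set of subspaces whose (internal) sum is direct
  and equals the whole space. n-ary brackets are functions on lists of length n.\<close>

definition k_linear :: "('k::field \<Rightarrow> 'v::ab_group_add \<Rightarrow> 'v) \<Rightarrow> ('v \<Rightarrow> 'v) \<Rightarrow> bool" where
  "k_linear scale f \<longleftrightarrow>
     (\<forall>x y. f (x + y) = f x + f y) \<and> (\<forall>c x. f (scale c x) = scale c (f x))"

definition is_subspace :: "('k::field \<Rightarrow> 'v::ab_group_add \<Rightarrow> 'v) \<Rightarrow> 'v set \<Rightarrow> bool" where
  "is_subspace scale S \<longleftrightarrow>
     0 \<in> S \<and> (\<forall>x\<in>S. \<forall>y\<in>S. x + y \<in> S) \<and> (\<forall>c. \<forall>x\<in>S. scale c x \<in> S)"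

definition is_vector_space :: "('k::field \<Rightarrow> 'v::ab_group_add \<Rightarrow> 'v) \<Rightarrow> bool" where
  "is_vector_space scale \<longleftrightarrow>
     (\<forall>a x y. scale a (x + y) = scale a x + scale a y) \<and>
     (\<forall>a b x. scale (a + b) x = scale a x + scale b x) \<and>
     (\<forall>a b x. scale a (scale b x) = scale (a * b) x) \<and>
     (\<forall>x. scale 1 x = x)"

definition graded_space ::
  "('k::field \<Rightarrow> 'v::ab_group_add \<Rightarrow> 'v) \<Rightarrow> ('g::ab_group_add \<Rightarrow> 'v set) \<Rightarrow> bool" where
  "graded_space scale G \<longleftrightarrow>
     is_vector_space scale \<and>
     (\<forall>a. is_subspace scale (G a)) \<and>
     (\<forall>v. \<exists>S f. finite S \<and> (\<forall>a\<in>S. f a \<in> G a) \<and> v = (\<Sum>a\<in>S. f a)) \<and>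
     (\<forall>S f. finite S \<and> (\<forall>a\<in>S. f a \<in> G a) \<and> (\<Sum>a\<in>S. f a) = 0 \<longrightarrow> (\<forall>a\<in>S. f a = 0))"

definition degree_zero_map ::
  "('g \<Rightarrow> 'v set) \<Rightarrow> ('v \<Rightarrow> 'v) \<Rightarrow> bool" where
  "degree_zero_map G f \<longleftrightarrow> (\<forall>a. \<forall>x\<in>G a. f x \<in> G a)"

definition bicharacter :: "('g::ab_group_add \<Rightarrow> 'g \<Rightarrow> 'k::field) \<Rightarrow> bool" where
  "bicharacter eps \<longleftrightarrow>
     (\<forall>a b. eps a b \<noteq> 0) \<and>
     (\<forall>a b. eps a b * eps b a = 1) \<and>
     (\<forall>a b c. eps a (b + c) = eps a b * eps a c) \<and>
     (\<forall>a b c. eps (a + b) c = eps a c * eps b c)"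

definition n_multilinear ::
  "('k::field \<Rightarrow> 'v::ab_group_add \<Rightarrow> 'v) \<Rightarrow> nat \<Rightarrow> ('v list \<Rightarrow> 'v) \<Rightarrow> bool" where
  "n_multilinear scale n br \<longleftrightarrow>
     (\<forall>xs i c u w. length xs = n \<and> i < n \<longrightarrow>
        br (xs[i := scale c u + w]) = scale c (br (xs[i := u])) + br (xs[i := w]))"

definition bracket_degree_zero ::
  "('g::ab_group_add \<Rightarrow> 'v set) \<Rightarrow> nat \<Rightarrow> ('v list \<Rightarrow> 'v) \<Rightarrow> bool" where
  "bracket_degree_zero G n br \<longleftrightarrow>
     (\<forall>xs as. length xs = n \<and> length as = n \<and> (\<forall>i<n. xs ! i \<in> G (as ! i))
        \<longrightarrow> br xs \<in> G (sum_list as))"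

definition homog :: "('g \<Rightarrow> 'v set) \<Rightarrow> 'v list \<Rightarrow> 'g list \<Rightarrow> bool" where
  "homog G xs as \<longleftrightarrow> length xs = length as \<and> (\<forall>i<length xs. xs ! i \<in> G (as ! i))"

text \<open>n-Hom-Lie color algebra (indices 0-based: positions i, i+1 for i+1 < n in (i);
  in (ii) the summand index i ranges over 0..n-1, corresponding to i+1 in the paper).\<close>
definition n_hom_lie_color ::
  "('k::field \<Rightarrow> 'v::ab_group_add \<Rightarrow> 'v) \<Rightarrow> ('g::ab_group_add \<Rightarrow> 'v set) \<Rightarrow> nat \<Rightarrow>
   ('v list \<Rightarrow> 'v) \<Rightarrow> ('g \<Rightarrow> 'g \<Rightarrow> 'k) \<Rightarrow> ('v \<Rightarrow> 'v) \<Rightarrow> bool" where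
  "n_hom_lie_color scale G n br eps alpha \<longleftrightarrow>
     graded_space scale G \<and>
     n_multilinear scale n br \<and> bracket_degree_zero G n br \<and>
     bicharacter eps \<and>
     k_linear scale alpha \<and> degree_zero_map G alpha \<and>
     (\<forall>xs as i. length xs = n \<and> homog G xs as \<and> Suc i < n \<longrightarrow>
        br xs = - scale (eps (as ! i) (as ! Suc i))
                   (br (xs[i := xs ! Suc i, Suc i := xs ! i]))) \<and>
     (\<forall>xs as ys bs. length xs = n - 1 \<and> homog G xs as \<and> length ys = n \<and> homog G ys bs \<longrightarrow>
        br (map alpha xs @ [br ys]) =
          (\<Sum>i<n. scale (eps (sum_list as) (sum_list (take i bs)))
             (br (map alpha (take i ys) @ [br (xs @ [ys ! i])] @ map alpha (drop (Suc i) ys)))))"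

definition applyN :: "('v \<Rightarrow> 'v) \<Rightarrow> nat set \<Rightarrow> 'v list \<Rightarrow> 'v list" where
  "applyN N S xs = map (\<lambda>k. if k \<in> S then N (xs ! k) else xs ! k) [0..<length xs]"

fun nbr :: "('v list \<Rightarrow> 'v::ab_group_add) \<Rightarrow> ('v \<Rightarrow> 'v) \<Rightarrow> nat \<Rightarrow> 'v list \<Rightarrow> 'v" where
  "nbr br N 0 xs = br xs"
| "nbr br N (Suc j) xs =
     (\<Sum>S\<in>{S. S \<subseteq> {..<length xs} \<and> card S = Suc j}. br (applyN N S xs)) - N (nbr br N j xs)"

definition nijenhuis ::
  "nat \<Rightarrow> ('v list \<Rightarrow> 'v::ab_group_add) \<Rightarrow> ('v \<Rightarrow> 'v) \<Rightarrow> ('v \<Rightarrow> 'v) \<Rightarrow> bool" where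
  "nijenhuis n br alpha N \<longleftrightarrow>
     N \<circ> alpha = alpha \<circ> N \<and>
     (\<forall>xs. length xs = n \<longrightarrow> br (map N xs) = N (nbr br N (n - 1) xs))"

definition lambda_bracket ::
  "('k::field \<Rightarrow> 'v::ab_group_add \<Rightarrow> 'v) \<Rightarrow> nat \<Rightarrow> ('v list \<Rightarrow> 'v) \<Rightarrow> ('v \<Rightarrow> 'v) \<Rightarrow> 'k \<Rightarrow> 'v list \<Rightarrow> 'v" where
  "lambda_bracket scale n br N lam xs = br xs + (\<Sum>i\<in>{1..n-1}. scale (lam ^ i) (nbr br N i xs))"

end

theory Submission
  imports Defs
begin

locale VS =
  fixes scale :: "'k::field_char_0 \<Rightarrow> 'v::ab_group_add \<Rightarrow> 'v"
  assumes vs: "is_vector_space scale"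
begin

lemma add_r: "scale a (x + y) = scale a x + scale a y"
  using vs unfolding is_vector_space_def by blast
lemma add_l: "scale (a + b) x = scale a x + scale b x"
  using vs unfolding is_vector_space_def by blast
lemma assoc: "scale a (scale b x) = scale (a * b) x"
  using vs unfolding is_vector_space_def by blast
lemma one[simp]: "scale 1 x = x"
  using vs unfolding is_vector_space_def by blast
lemma zero_r[simp]: "scale a 0 = 0"
  using add_r[of a 0 0] by simp
lemma zero_l[simp]: "scale 0 x = 0"
  using add_l[of 0 0 x] by simp
lemma minus_r: "scale a (x - y) = scale a x - scale a y"
  using add_r[of a "x - y" y] by (simp add: eq_diff_eq)
lemma minus_l: "scale (a - b) x = scale a x - scale b x"
  using add_l[of "a - b" b x] by (simp add: eq_diff_eq)
lemma neg_r: "scale a (- x) = - scale a x"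
  using minus_r[of a 0 x] by simp
lemma neg_l: "scale (- a) x = - scale a x"
  using minus_l[of 0 a x] by simp
lemma sum_r: "scale a (sum f A) = (\<Sum>i\<in>A. scale a (f i))"
  by (induction A rule: infinite_finite_induct) (auto simp: add_r)
lemma comm: "scale a (scale b x) = scale b (scale a x)"
  by (simp add: assoc mult.commute)
lemma inv_cancel: "c \<noteq> 0 \<Longrightarrow> scale c x = 0 \<Longrightarrow> x = 0"
  using assoc[of "inverse c" c x] by simp

lemma klin_add: "k_linear scale F \<Longrightarrow> F (x + y) = F x + F y"
  unfolding k_linear_def by blast
lemma klin_scale: "k_linear scale F \<Longrightarrow> F (scale c x) = scale c (F x)"
  unfolding k_linear_def by blast
lemma klin_zero: "k_linear scale F \<Longrightarrow> F 0 = 0"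
  using klin_add[of F 0 0] by simp
lemma klin_minus: "k_linear scale F \<Longrightarrow> F (x - y) = F x - F y"
  using klin_add[of F "x - y" y] by (simp add: eq_diff_eq)
lemma klin_neg: "k_linear scale F \<Longrightarrow> F (- x) = - F x"
  using klin_minus[of F 0 x] by (simp add: klin_zero)
lemma klin_sum: "k_linear scale F \<Longrightarrow> F (sum f A) = (\<Sum>i\<in>A. F (f i))"
  by (induction A rule: infinite_finite_induct) (auto simp: klin_add klin_zero)

definition polyf :: "('k \<Rightarrow> 'v) \<Rightarrow> bool" where
  "polyf f \<longleftrightarrow> (\<exists>M a. \<forall>l. f l = (\<Sum>k<M. scale (l ^ k) (a k)))"

lemma two_pow_neq: "k < M \<Longrightarrow> (2::'k) ^ k \<noteq> 2 ^ M"
proof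
  assume "k < M" "(2::'k) ^ k = 2 ^ M"
  then have "(of_nat (2 ^ k) :: 'k) = of_nat (2 ^ M)" by simp
  then have "(2::nat) ^ k = 2 ^ M" using of_nat_eq_iff by blast
  with \<open>k < M\<close> show False by simp
qed

lemma coeffs_zero:
  "(\<forall>l. (\<Sum>k<M. scale (l ^ k) (a k)) = 0) \<Longrightarrow> k < M \<Longrightarrow> a k = 0"
proof (induction M arbitrary: a k)
  case 0 then show ?case by simp
next
  case (Suc M)
  define b where "b k = scale (2 ^ k - 2 ^ M) (a k)" for k
  have "\<forall>l. (\<Sum>k<M. scale (l ^ k) (b k)) = 0"
  proof
    fix l :: 'k
    have "(\<Sum>k<M. scale (l ^ k) (b k)) = (\<Sum>k<Suc M. scale (l ^ k) (b k))"
      by (simp add: b_def)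
    also have "\<dots> = (\<Sum>k<Suc M. scale ((2 * l) ^ k) (a k) - scale (2 ^ M) (scale (l ^ k) (a k)))"
    proof (rule sum.cong)
      fix k
      have "l ^ k * (2 ^ k - 2 ^ M) = (2 * l) ^ k - 2 ^ M * l ^ k"
        by (simp add: power_mult_distrib algebra_simps)
      then show "scale (l ^ k) (b k) = scale ((2 * l) ^ k) (a k) - scale (2 ^ M) (scale (l ^ k) (a k))"
        unfolding b_def assoc by (simp add: minus_l)
    qed simp
    also have "\<dots> = (\<Sum>k<Suc M. scale ((2 * l) ^ k) (a k)) - scale (2 ^ M) (\<Sum>k<Suc M. scale (l ^ k) (a k))"
      by (simp only: sum_subtractf sum_r)
    also have "\<dots> = 0" using Suc.prems(1)[rule_format, of "2 * l"] Suc.prems(1)[rule_format, of l] by (simp del: sum.lessThan_Suc)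
    finally show "(\<Sum>k<M. scale (l ^ k) (b k)) = 0" .
  qed
  then have bz: "k < M \<Longrightarrow> a k = 0" for k
    using Suc.IH[of b k] two_pow_neq[of k M] inv_cancel[of "2 ^ k - 2 ^ M" "a k"]
    by (simp add: b_def)
  have "a M = 0"
    using Suc.prems(1) [rule_format, of 1] bz by simp
  then show ?case using bz Suc.prems(2) less_Suc_eq by auto
qed

lemma sum_pad: "M \<le> M' \<Longrightarrow>
  (\<Sum>k<M'. scale (l ^ k) (if k < M then a k else 0)) = (\<Sum>k<M. scale (l ^ k) (a k))"
proof -
  assume "M \<le> M'"
  have "(\<Sum>k<M'. scale (l ^ k) (if k < M then a k else 0)) = (\<Sum>k\<in>{..<M'} \<inter> {k. k < M}. scale (l ^ k) (a k))"
    by (simp add: sum.inter_restrict if_distrib cong: if_cong)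
  also have "{..<M'} \<inter> {k. k < M} = {..<M}" using \<open>M \<le> M'\<close> by auto
  finally show ?thesis .
qed

lemma polyf_const: "polyf (\<lambda>l. c)"
  unfolding polyf_def by (rule exI[of _ 1], rule exI[of _ "\<lambda>_. c"]) simp

lemma polyf_zero: "polyf (\<lambda>l. 0)"
  unfolding polyf_def by (rule exI[of _ 0]) simp

lemma polyf_add: "polyf f \<Longrightarrow> polyf g \<Longrightarrow> polyf (\<lambda>l. f l + g l)"
proof -
  assume "polyf f" "polyf g"
  then obtain M1 a1 M2 a2 where f: "\<forall>l. f l = (\<Sum>k<M1. scale (l ^ k) (a1 k))"
    and g: "\<forall>l. g l = (\<Sum>k<M2. scale (l ^ k) (a2 k))" unfolding polyf_def by blast
  show ?thesis unfolding polyf_def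
  proof (intro exI allI)
    fix l
    show "f l + g l = (\<Sum>k<M1+M2. scale (l ^ k) ((if k < M1 then a1 k else 0) + (if k < M2 then a2 k else 0)))"
      by (simp only: add_r sum.distrib sum_pad f g le_add1 le_add2)
  qed
qed

lemma polyf_scale: "polyf f \<Longrightarrow> polyf (\<lambda>l. scale c (f l))"
proof -
  assume "polyf f"
  then obtain M a where f: "\<forall>l. f l = (\<Sum>k<M. scale (l ^ k) (a k))" unfolding polyf_def by blast
  show ?thesis unfolding polyf_def
    by (rule exI[of _ M], rule exI[of _ "\<lambda>k. scale c (a k)"]) (simp add: f sum_r comm)
qed

lemma polyf_lin: "k_linear scale F \<Longrightarrow> polyf f \<Longrightarrow> polyf (\<lambda>l. F (f l))"
proof -
  assume F: "k_linear scale F" and "polyf f"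
  then obtain M a where f: "\<forall>l. f l = (\<Sum>k<M. scale (l ^ k) (a k))" unfolding polyf_def by blast
  show ?thesis unfolding polyf_def
    by (rule exI[of _ M], rule exI[of _ "\<lambda>k. F (a k)"]) (simp add: f klin_sum[OF F] klin_scale[OF F])
qed

lemma polyf_neg: "polyf f \<Longrightarrow> polyf (\<lambda>l. - f l)"
  using polyf_scale[of f "-1"] by (simp add: neg_l)

lemma polyf_diff: "polyf f \<Longrightarrow> polyf g \<Longrightarrow> polyf (\<lambda>l. f l - g l)"
  using polyf_add[of f "\<lambda>l. - g l"] polyf_neg[of g] by simp

lemma polyf_sum: "finite A \<Longrightarrow> (\<And>i. i \<in> A \<Longrightarrow> polyf (f i)) \<Longrightarrow> polyf (\<lambda>l. \<Sum>i\<in>A. f i l)"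
  by (induction A rule: finite_induct) (auto simp: polyf_zero polyf_add)

lemma shift_sum: "scale l (\<Sum>k<M. scale (l ^ k) (a k)) = (\<Sum>k<Suc M. scale (l ^ k) (if k = 0 then 0 else a (k - 1)))"
  by (simp only: sum.lessThan_Suc_shift sum_r assoc) (simp add: mult.commute)

lemma polyf_mul: "polyf f \<Longrightarrow> polyf (\<lambda>l. scale l (f l))"
proof -
  assume "polyf f"
  then obtain M a where f: "\<forall>l. f l = (\<Sum>k<M. scale (l ^ k) (a k))" unfolding polyf_def by blast
  show ?thesis unfolding polyf_def
    by (rule exI[of _ "Suc M"], rule exI[of _ "\<lambda>k. if k = 0 then 0 else a (k - 1)"]) (simp only: f shift_sum, simp)
qed

lemma polyf_pow: "polyf f \<Longrightarrow> polyf (\<lambda>l. scale (l ^ j) (f l))"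
proof (induction j)
  case 0 then show ?case by simp
next
  case (Suc j)
  then show ?case using polyf_mul[of "\<lambda>l. scale (l ^ j) (f l)"] by (simp add: assoc)
qed

lemma polyf_T_zero:
  assumes N: "k_linear scale N" and p: "polyf f" and T: "\<forall>l. f l + scale l (N (f l)) = 0"
  shows "f l = 0"
proof -
  obtain M a where f: "\<forall>l. f l = (\<Sum>k<M. scale (l ^ k) (a k))" using p unfolding polyf_def by blast
  define b where "b k = (if k < M then a k else 0) + (if k = 0 then 0 else N (a (k - 1)))" for k
  have "\<forall>l. (\<Sum>k<Suc M. scale (l ^ k) (b k)) = 0"
  proof
    fix l
    have "(\<Sum>k<Suc M. scale (l ^ k) (b k)) = f l + scale l (N (f l))"
      unfolding b_def add_r sum.distrib
      by (simp only: sum_pad[OF le_SucI[OF order_refl]] f klin_sum[OF N] klin_scale[OF N] shift_sum)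
    then show "(\<Sum>k<Suc M. scale (l ^ k) (b k)) = 0" using T by simp
  qed
  then have bz: "k < Suc M \<Longrightarrow> b k = 0" for k using coeffs_zero by blast
  have "k < M \<Longrightarrow> a k = 0" for k
  proof (induction k)
    case 0 then show ?case using bz[of 0] by (simp add: b_def)
  next
    case (Suc k) then show ?case using bz[of "Suc k"] by (simp add: b_def klin_zero[OF N])
  qed
  then show ?thesis using f by simp
qed

lemma ml_klin:
  assumes B: "n_multilinear scale n B" and "length xs = n" "i < n"
  shows "k_linear scale (\<lambda>v. B (xs[i := v]))"
proof -
  have m: "B (xs[i := scale c u + w]) = scale c (B (xs[i := u])) + B (xs[i := w])" for c u w
    using B assms unfolding n_multilinear_def by blast
  have z: "B (xs[i := 0]) = 0" using m[of 1 0 0] by simp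
  show ?thesis unfolding k_linear_def
    using m[of 1] m[of _ _ 0] z by simp
qed

lemma length_applyN[simp]: "length (applyN f S xs) = length xs"
  by (simp add: applyN_def)

lemma nth_applyN[simp]: "k < length xs \<Longrightarrow> applyN f S xs ! k = (if k \<in> S then f (xs ! k) else xs ! k)"
  by (simp add: applyN_def)

lemma applyN_update: "i < length xs \<Longrightarrow>
  applyN f S (xs[i := v]) = (applyN f S xs)[i := (if i \<in> S then f v else v)]"
  by (rule nth_equalityI) (auto simp: nth_list_update)

lemma applyN_empty[simp]: "applyN f {} xs = xs"
  by (rule nth_equalityI) auto

lemma applyN_all: "{..<length xs} \<subseteq> S \<Longrightarrow> applyN f S xs = map f xs"
  by (rule nth_equalityI) auto

lemma nbr_ml:
  assumes N: "k_linear scale N" and B: "n_multilinear scale n br"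
  shows "n_multilinear scale n (nbr br N j)"
proof (induction j)
  case 0 then show ?case using B by simp
next
  case (Suc j)
  show ?case unfolding n_multilinear_def
  proof (intro allI impI)
    fix xs :: "'v list" and i c u w assume h: "length xs = n \<and> i < n"
    define A where "A = {S. S \<subseteq> {..<n} \<and> card S = Suc j}"
    have ind: "nbr br N j (xs[i := scale c u + w]) = scale c (nbr br N j (xs[i := u])) + nbr br N j (xs[i := w])"
      using Suc h unfolding n_multilinear_def by blast
    have each: "br (applyN N S (xs[i := scale c u + w])) = scale c (br (applyN N S (xs[i := u]))) + br (applyN N S (xs[i := w]))" for S
    proof -
      have m: "br ((applyN N S xs)[i := scale c u' + w']) = scale c (br ((applyN N S xs)[i := u'])) + br ((applyN N S xs)[i := w'])" for u' w'
        using B h unfolding n_multilinear_def by simp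
      show ?thesis using h m[of "N u" "N w"] m[of u w]
        by (simp add: applyN_update klin_add[OF N] klin_scale[OF N])
    qed
    have "nbr br N (Suc j) (xs[i := scale c u + w]) =
      (\<Sum>S\<in>A. scale c (br (applyN N S (xs[i := u]))) + br (applyN N S (xs[i := w])))
        - N (scale c (nbr br N j (xs[i := u])) + nbr br N j (xs[i := w]))"
      using h by (simp add: A_def each ind)
    also have "\<dots> = scale c ((\<Sum>S\<in>A. br (applyN N S (xs[i := u]))) - N (nbr br N j (xs[i := u])))
       + ((\<Sum>S\<in>A. br (applyN N S (xs[i := w]))) - N (nbr br N j (xs[i := w])))"
      by (simp add: sum.distrib sum_r minus_r klin_add[OF N] klin_scale[OF N])
    also have "\<dots> = scale c (nbr br N (Suc j) (xs[i := u])) + nbr br N (Suc j) (xs[i := w])"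
      using h by (simp add: A_def)
    finally show "nbr br N (Suc j) (xs[i := scale c u + w]) = scale c (nbr br N (Suc j) (xs[i := u])) + nbr br N (Suc j) (xs[i := w])" .
  qed
qed

lemma ml_zero: "n_multilinear scale n B \<Longrightarrow> length xs = n \<Longrightarrow> i < n \<Longrightarrow> B (xs[i := 0]) = 0"
  using ml_klin klin_zero by fastforce

lemma expand:
  assumes N: "k_linear scale N" and B: "n_multilinear scale n B"
  shows "length xs = n \<Longrightarrow> m \<le> n \<Longrightarrow>
    B (applyN (\<lambda>x. x + scale l (N x)) {..<m} xs) = (\<Sum>S\<in>Pow {..<m}. scale (l ^ card S) (B (applyN N S xs)))"
proof (induction m arbitrary: xs)
  case 0 then show ?case by simp
next
  case (Suc m)
  let ?T = "\<lambda>x. x + scale l (N x)"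
  define W where "W = applyN ?T {..<m} xs"
  have m: "m < length xs" using Suc by simp
  have W1: "applyN ?T {..<Suc m} xs = W[m := scale l (N (xs ! m)) + xs ! m]"
    unfolding W_def using m by (intro nth_equalityI) (auto simp: nth_list_update add.commute)
  have W2: "W[m := xs ! m] = W" unfolding W_def using m by (intro nth_equalityI) (auto simp: nth_list_update)
  have W3: "W[m := N (xs ! m)] = applyN ?T {..<m} (xs[m := N (xs ! m)])"
    unfolding W_def using m by (simp add: applyN_update)
  have lW: "length W = n" using Suc by (simp add: W_def)
  have "B (applyN ?T {..<Suc m} xs) = scale l (B (W[m := N (xs ! m)])) + B (W[m := xs ! m])"
    unfolding W1 using B lW Suc m unfolding n_multilinear_def by simp
  also have "\<dots> = scale l (\<Sum>S\<in>Pow {..<m}. scale (l ^ card S) (B (applyN N S (xs[m := N (xs ! m)]))))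
      + (\<Sum>S\<in>Pow {..<m}. scale (l ^ card S) (B (applyN N S xs)))"
    unfolding W2 W3 using Suc by (simp add: W_def)
  also have "\<dots> = (\<Sum>S\<in>insert m ` Pow {..<m}. scale (l ^ card S) (B (applyN N S xs)))
      + (\<Sum>S\<in>Pow {..<m}. scale (l ^ card S) (B (applyN N S xs)))"
  proof -
    have inj: "inj_on (insert m) (Pow {..<m})"
    proof (rule inj_onI)
      fix x y assume xy: "x \<in> Pow {..<m}" "y \<in> Pow {..<m}" "insert m x = insert m y"
      then have "insert m x - {m} = insert m y - {m}" by simp
      moreover have "m \<notin> x" "m \<notin> y" using xy by auto
      ultimately show "x = y" by simp
    qed
    have e: "S \<in> Pow {..<m} \<Longrightarrow> applyN N S (xs[m := N (xs ! m)]) = applyN N (insert m S) xs" for S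
      using m by (intro nth_equalityI) (auto simp: nth_list_update)
    have c: "S \<in> Pow {..<m} \<Longrightarrow> card (insert m S) = Suc (card S)" for S
      by (subst card_insert_disjoint) (auto intro: finite_subset)
    show ?thesis
      by (simp add: sum.reindex[OF inj] sum_r assoc e c mult.commute)
  qed
  also have "\<dots> = (\<Sum>S\<in>Pow {..<Suc m}. scale (l ^ card S) (B (applyN N S xs)))"
  proof -
    have "Pow {..<Suc m} = Pow {..<m} \<union> insert m ` Pow {..<m}"
      by (simp add: lessThan_Suc Pow_insert)
    moreover have "Pow {..<m} \<inter> insert m ` Pow {..<m} = {}" by auto
    ultimately show ?thesis by (simp add: sum.union_disjoint add.commute)
  qed
  finally show ?case .
qed

end

locale NIJ =
  fixes scale :: "'k::field_char_0 \<Rightarrow> 'v::ab_group_add \<Rightarrow> 'v"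
    and G :: "'g::ab_group_add \<Rightarrow> 'v set"
    and n :: nat
    and br :: "'v list \<Rightarrow> 'v"
    and eps :: "'g \<Rightarrow> 'g \<Rightarrow> 'k"
    and alpha N :: "'v \<Rightarrow> 'v"
  assumes n2: "n \<ge> 2"
    and H: "n_hom_lie_color scale G n br eps alpha"
    and NL: "k_linear scale N" and NG: "degree_zero_map G N"
    and NJ: "nijenhuis n br alpha N"

sublocale NIJ \<subseteq> VS scale
  using H unfolding n_hom_lie_color_def graded_space_def by unfold_locales blast

context NIJ
begin

lemma graded: "graded_space scale G" using H unfolding n_hom_lie_color_def by blast
lemma brml: "n_multilinear scale n br" using H unfolding n_hom_lie_color_def by blast
lemma brdeg: "bracket_degree_zero G n br" using H unfolding n_hom_lie_color_def by blast
lemma alin: "k_linear scale alpha" using H unfolding n_hom_lie_color_def by blast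
lemma skew: "length xs = n \<Longrightarrow> homog G xs as \<Longrightarrow> Suc i < n \<Longrightarrow>
        br xs = - scale (eps (as ! i) (as ! Suc i)) (br (xs[i := xs ! Suc i, Suc i := xs ! i]))"
  using H unfolding n_hom_lie_color_def by blast
lemma jac: "length xs = n - 1 \<Longrightarrow> homog G xs as \<Longrightarrow> length ys = n \<Longrightarrow> homog G ys bs \<Longrightarrow>
        br (map alpha xs @ [br ys]) =
          (\<Sum>i<n. scale (eps (sum_list as) (sum_list (take i bs)))
             (br (map alpha (take i ys) @ [br (xs @ [ys ! i])] @ map alpha (drop (Suc i) ys))))"
  using H unfolding n_hom_lie_color_def by blast
lemma Nalpha: "N (alpha x) = alpha (N x)"
  using NJ unfolding nijenhuis_def by (metis comp_apply)
lemma NJ2: "length xs = n \<Longrightarrow> br (map N xs) = N (nbr br N (n - 1) xs)"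
  using NJ unfolding nijenhuis_def by blast

lemma Gsub: "is_subspace scale (G a)" using graded unfolding graded_space_def by blast
lemma G0: "0 \<in> G a" using Gsub unfolding is_subspace_def by blast
lemma Gadd: "x \<in> G a \<Longrightarrow> y \<in> G a \<Longrightarrow> x + y \<in> G a" using Gsub unfolding is_subspace_def by blast
lemma Gscale: "x \<in> G a \<Longrightarrow> scale c x \<in> G a" using Gsub unfolding is_subspace_def by blast
lemma Gneg: "x \<in> G a \<Longrightarrow> - x \<in> G a" using Gscale[of x a "-1"] by (simp add: neg_l)
lemma Gdiff: "x \<in> G a \<Longrightarrow> y \<in> G a \<Longrightarrow> x - y \<in> G a" using Gadd[of x a "- y"] Gneg by simp
lemma Gsum: "(\<And>i. i \<in> A \<Longrightarrow> f i \<in> G a) \<Longrightarrow> sum f A \<in> G a"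
  by (induction A rule: infinite_finite_induct) (auto simp: G0 Gadd)
lemma GN: "x \<in> G a \<Longrightarrow> N x \<in> G a" using NG unfolding degree_zero_map_def by blast

abbreviation LB where "LB l \<equiv> lambda_bracket scale n br N l"
definition TT where "TT l x = x + scale l (N x)"

lemma TT_lin: "k_linear scale (TT l)"
  unfolding k_linear_def TT_def
  by (auto simp: klin_add[OF NL] klin_scale[OF NL] add_r comm)

lemma TT_G: "x \<in> G a \<Longrightarrow> TT l x \<in> G a"
  unfolding TT_def by (simp add: Gadd Gscale GN)

lemma TT_alpha: "alpha x + scale l (N (alpha x)) = alpha (x + scale l (N x))"
  by (simp add: klin_add[OF alin] klin_scale[OF alin] Nalpha)

lemma TT_alpha': "TT l (alpha x) = alpha (TT l x)"
  unfolding TT_def by (rule TT_alpha)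

lemma LB_expand: "LB l xs = (\<Sum>i<n. scale (l ^ i) (nbr br N i xs))"
proof -
  have e: "{..<n} = insert 0 {1..n-1}" using n2 by auto
  show ?thesis unfolding lambda_bracket_def e by simp
qed

lemma claim3:
  assumes len: "length xs = n"
  shows "LB l xs + scale l (N (LB l xs)) = br (map (\<lambda>x. x + scale l (N x)) xs)"
proof -
  define s where "s j = (\<Sum>S\<in>{S \<in> Pow {..<n}. card S = j}. br (applyN N S xs))" for j
  have "br (map (\<lambda>x. x + scale l (N x)) xs) = br (applyN (\<lambda>x. x + scale l (N x)) {..<n} xs)"
    using len by (simp add: applyN_all)
  also have "\<dots> = (\<Sum>S\<in>Pow {..<n}. scale (l ^ card S) (br (applyN N S xs)))"
    using expand[OF NL brml len] by simp
  also have "\<dots> = (\<Sum>j\<in>{..<Suc n}. \<Sum>S\<in>{S \<in> Pow {..<n}. card S = j}. scale (l ^ card S) (br (applyN N S xs)))"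
    by (rule sum.group[symmetric]) (auto simp: card_mono less_Suc_eq_le intro!: card_mono[of "{..<n}", simplified])
  also have "\<dots> = (\<Sum>j<Suc n. scale (l ^ j) (s j))"
    unfolding s_def sum_r by (rule sum.cong) auto
  finally have rhs: "br (map (\<lambda>x. x + scale l (N x)) xs) = (\<Sum>j<Suc n. scale (l ^ j) (s j))" .
  have s0: "s 0 = br xs"
  proof -
    have "{S \<in> Pow {..<n}. card S = 0} = {{}}" by (auto dest: finite_subset[OF _ finite_lessThan])
    then show ?thesis by (simp add: s_def)
  qed
  have sS: "s (Suc j) = nbr br N (Suc j) xs + N (nbr br N j xs)" for j
  proof -
    have "{S \<in> Pow {..<n}. card S = Suc j} = {S. S \<subseteq> {..<length xs} \<and> card S = Suc j}"
      using len by auto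
    then show ?thesis by (simp add: s_def)
  qed
  have sn: "s n = N (nbr br N (n - 1) xs)"
  proof -
    have "{S \<in> Pow {..<n}. card S = n} = {{..<n}}"
    proof (intro set_eqI iffI)
      fix S assume "S \<in> {S \<in> Pow {..<n}. card S = n}"
      then have "S = {..<n}" using card_subset_eq[of "{..<n}" S] by auto
      then show "S \<in> {{..<n}}" by simp
    qed auto
    then show ?thesis using NJ2[OF len] len by (simp add: s_def applyN_all)
  qed
  have "LB l xs + scale l (N (LB l xs)) =
     (\<Sum>i<n. scale (l ^ i) (nbr br N i xs)) + (\<Sum>i<Suc n. scale (l ^ i) (if i = 0 then 0 else N (nbr br N (i - 1) xs)))"
    unfolding LB_expand by (simp only: klin_sum[OF NL] klin_scale[OF NL] shift_sum)
  also have "\<dots> = (\<Sum>i<Suc n. scale (l ^ i) ((if i < n then nbr br N i xs else 0) + (if i = 0 then 0 else N (nbr br N (i - 1) xs))))"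
    by (simp only: add_r sum.distrib sum_pad[OF le_SucI[OF order_refl]])
  also have "\<dots> = (\<Sum>j<Suc n. scale (l ^ j) (s j))"
  proof (rule sum.cong[OF refl])
    fix i assume "i \<in> {..<Suc n}"
    then consider "i = 0" | "0 < i" "i < n" | "i = n" by force
    then show "scale (l ^ i) ((if i < n then nbr br N i xs else 0) + (if i = 0 then 0 else N (nbr br N (i - 1) xs))) = scale (l ^ i) (s i)"
    proof cases
      case 1 then show ?thesis using n2 s0 by simp
    next
      case 2 then obtain j where "i = Suc j" by (cases i) auto
      then show ?thesis using 2 sS by simp
    next
      case 3 then show ?thesis using n2 sn by simp
    qed
  qed
  finally show ?thesis using rhs by simp
qed


definition sw :: "nat \<Rightarrow> nat \<Rightarrow> nat" where
  "sw i k = (if k = i then Suc i else if k = Suc i then i else k)"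

lemma sw_sw[simp]: "sw i (sw i k) = k" by (simp add: sw_def)
lemma sw_inj: "inj (sw i)" by (metis injI sw_sw)
lemma sw_img_img[simp]: "sw i ` sw i ` S = S" by (simp add: image_image)
lemma mem_sw: "k \<in> sw i ` S \<longleftrightarrow> sw i k \<in> S" by (metis imageE image_eqI sw_sw)

lemma applyN_swap:
  assumes "Suc i < length xs"
  shows "(applyN f S xs)[i := applyN f S xs ! Suc i, Suc i := applyN f S xs ! i]
       = applyN f (sw i ` S) (xs[i := xs ! Suc i, Suc i := xs ! i])"
  using assms by (intro nth_equalityI) (auto simp: nth_list_update mem_sw sw_def)

lemma homog_applyN: "homog G xs as \<Longrightarrow> homog G (applyN N S xs) as"
  unfolding homog_def by (auto simp: GN)

lemma homog_map_TT: "homog G xs as \<Longrightarrow> homog G (map (TT l) xs) as"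
  unfolding homog_def by (auto simp: TT_G)

lemma nbr_skew:
  assumes "length xs = n" "homog G xs as" "Suc i < n"
  shows "nbr br N j xs = - scale (eps (as ! i) (as ! Suc i)) (nbr br N j (xs[i := xs ! Suc i, Suc i := xs ! i]))"
proof (induction j)
  case 0 then show ?case using skew assms by simp
next
  case (Suc j)
  let ?e = "eps (as ! i) (as ! Suc i)"
  let ?xs' = "xs[i := xs ! Suc i, Suc i := xs ! i]"
  define A where "A = {S. S \<subseteq> {..<n} \<and> card S = Suc j}"
  have each: "br (applyN N S xs) = - scale ?e (br (applyN N (sw i ` S) ?xs'))" for S
    using skew[of "applyN N S xs" as i] assms homog_applyN[OF assms(2)] applyN_swap[of i xs N S]
    by simp
  have swA: "sw i ` S \<in> A" if "S \<in> A" for S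
  proof -
    have c: "card (sw i ` S) = card S" by (rule card_image) (rule inj_on_subset[OF sw_inj], simp)
    have "sw i ` S \<subseteq> {..<n}" using \<open>S \<in> A\<close> assms(3) unfolding A_def by (auto simp: sw_def)
    then show "sw i ` S \<in> A" using c \<open>S \<in> A\<close> unfolding A_def by simp
  qed
  have reidx: "(\<Sum>S\<in>A. br (applyN N (sw i ` S) ?xs')) = (\<Sum>S\<in>A. br (applyN N S ?xs'))"
    by (rule sum.reindex_bij_witness[of _ "image (sw i)" "image (sw i)"]) (auto simp: swA)
  have "nbr br N (Suc j) xs = (\<Sum>S\<in>A. - scale ?e (br (applyN N (sw i ` S) ?xs'))) - N (- scale ?e (nbr br N j ?xs'))"
    using assms Suc by (simp add: A_def each)
  also have "\<dots> = - scale ?e ((\<Sum>S\<in>A. br (applyN N S ?xs')) - N (nbr br N j ?xs'))"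
    by (simp add: sum_negf sum_r[symmetric] reidx klin_neg[OF NL] klin_scale[OF NL] minus_r)
  also have "\<dots> = - scale ?e (nbr br N (Suc j) ?xs')"
    using assms by (simp add: A_def)
  finally show ?case .
qed

lemma nbr_deg: "bracket_degree_zero G n (nbr br N j)"
proof (induction j)
  case 0 then show ?case using brdeg by simp
next
  case (Suc j)
  show ?case unfolding bracket_degree_zero_def
  proof (intro allI impI)
    fix xs as assume h: "length xs = n \<and> length as = n \<and> (\<forall>i<n. xs ! i \<in> G (as ! i))"
    have "br (applyN N S xs) \<in> G (sum_list as)" for S
      using brdeg h unfolding bracket_degree_zero_def by (auto simp: GN)
    moreover have "nbr br N j xs \<in> G (sum_list as)" using Suc h unfolding bracket_degree_zero_def by blast
    ultimately show "nbr br N (Suc j) xs \<in> G (sum_list as)"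
      by (simp add: Gdiff Gsum GN)
  qed
qed

lemma LB_ml: "n_multilinear scale n (LB l)"
  unfolding n_multilinear_def LB_expand
proof (intro allI impI)
  fix xs :: "'v list" and i c u w assume h: "length xs = n \<and> i < n"
  have "nbr br N k (xs[i := scale c u + w]) = scale c (nbr br N k (xs[i := u])) + nbr br N k (xs[i := w])" for k
    using nbr_ml[OF NL brml, of k] h unfolding n_multilinear_def by blast
  then show "(\<Sum>k<n. scale (l ^ k) (nbr br N k (xs[i := scale c u + w]))) =
       scale c (\<Sum>k<n. scale (l ^ k) (nbr br N k (xs[i := u]))) + (\<Sum>k<n. scale (l ^ k) (nbr br N k (xs[i := w])))"
    by (simp add: add_r sum.distrib sum_r comm)
qed

lemma LB_deg: "bracket_degree_zero G n (LB l)"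
  unfolding bracket_degree_zero_def LB_expand
  using nbr_deg unfolding bracket_degree_zero_def by (auto intro!: Gsum Gscale)

lemma LB_skew: "length xs = n \<Longrightarrow> homog G xs as \<Longrightarrow> Suc i < n \<Longrightarrow>
        LB l xs = - scale (eps (as ! i) (as ! Suc i)) (LB l (xs[i := xs ! Suc i, Suc i := xs ! i]))"
  unfolding LB_expand
  by (subst nbr_skew, assumption+) (simp add: neg_r sum_negf sum_r comm)


lemma polyf_LB: "polyf (\<lambda>l. LB l ys)"
  unfolding LB_expand by (intro polyf_sum polyf_pow polyf_const) simp

lemma polyf_slot:
  assumes "length zs = n" "p < n" "polyf g"
  shows "polyf (\<lambda>l. LB l (zs[p := g l]))"
  unfolding LB_expand
proof (intro polyf_sum polyf_pow)
  fix k show "polyf (\<lambda>l. nbr br N k (zs[p := g l]))"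
    by (rule polyf_lin[OF ml_klin[OF nbr_ml[OF NL brml] assms(1,2)] assms(3)])
qed simp

lemma claim3': "length xs = n \<Longrightarrow> TT l (LB l xs) = br (map (TT l) xs)"
  unfolding TT_def using claim3 by simp

lemma LB_jac:
  assumes hx: "length xs = n - 1" "homog G xs as" and hy: "length ys = n" "homog G ys bs"
  shows "LB l (map alpha xs @ [LB l ys]) =
          (\<Sum>i<n. scale (eps (sum_list as) (sum_list (take i bs)))
             (LB l (map alpha (take i ys) @ [LB l (xs @ [ys ! i])] @ map alpha (drop (Suc i) ys))))"
proof -
  define e where "e i = eps (sum_list as) (sum_list (take i bs))" for i
  define L where "L l = LB l (map alpha xs @ [LB l ys])" for l
  define R where "R l = (\<Sum>i<n. scale (e i)
             (LB l (map alpha (take i ys) @ [LB l (xs @ [ys ! i])] @ map alpha (drop (Suc i) ys))))" for l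
  define J where "J l = L l - R l" for l
  have n1: "n - 1 < n" "Suc (n - 1) = n" using n2 by auto
  have pL: "polyf L"
  proof -
    have "L = (\<lambda>l. LB l ((map alpha xs @ [0])[n - 1 := LB l ys]))"
      unfolding L_def using hx by (simp add: list_update_append)
    moreover have "polyf (\<lambda>l. LB l ((map alpha xs @ [0])[n - 1 := LB l ys]))"
      by (rule polyf_slot) (use polyf_LB hx n1 in auto)
    ultimately show ?thesis by simp
  qed
  have pR: "polyf R"
    unfolding R_def
  proof (intro polyf_sum polyf_scale)
    fix i assume i: "i \<in> {..<n}"
    let ?zs = "map alpha (take i ys) @ [0] @ map alpha (drop (Suc i) ys)"
    have "LB l (map alpha (take i ys) @ [LB l (xs @ [ys ! i])] @ map alpha (drop (Suc i) ys))
        = LB l (?zs[i := LB l (xs @ [ys ! i])])" for l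
      using i hy by (simp add: list_update_append)
    moreover have "polyf (\<lambda>l. LB l (?zs[i := LB l (xs @ [ys ! i])]))"
      by (rule polyf_slot) (use i hy n2 in \<open>auto simp: polyf_LB\<close>)
    ultimately show "polyf (\<lambda>l. LB l (map alpha (take i ys) @ [LB l (xs @ [ys ! i])] @ map alpha (drop (Suc i) ys)))"
      by simp
  qed simp
  have pJ: "polyf J" unfolding J_def by (rule polyf_diff[OF pL pR])
  have TJ: "\<forall>l. J l + scale l (N (J l)) = 0"
  proof
    fix l
    have cmp: "TT l \<circ> alpha = alpha \<circ> TT l" by (rule ext) (simp add: TT_alpha')
    have mapTT: "map (TT l) (map alpha zs) = map alpha (map (TT l) zs)" for zs
      by (simp add: TT_alpha')
    have TL: "TT l (L l) = br (map alpha (map (TT l) xs) @ [br (map (TT l) ys)])"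
      unfolding L_def using hx hy n2 by (simp add: claim3' mapTT cmp)
    have TR: "TT l (R l) = (\<Sum>i<n. scale (e i)
             (br (map alpha (take i (map (TT l) ys)) @ [br (map (TT l) xs @ [map (TT l) ys ! i])] @ map alpha (drop (Suc i) (map (TT l) ys)))))"
      unfolding R_def klin_sum[OF TT_lin] klin_scale[OF TT_lin]
    proof (rule sum.cong[OF refl])
      fix i assume i: "i \<in> {..<n}"
      have l1: "length (map alpha (take i ys) @ [LB l (xs @ [ys ! i])] @ map alpha (drop (Suc i) ys)) = n"
        using i hy by auto
      have l2: "length (xs @ [ys ! i]) = n" using hx n2 by simp
      show "scale (e i) (TT l (LB l (map alpha (take i ys) @ [LB l (xs @ [ys ! i])] @ map alpha (drop (Suc i) ys)))) =
         scale (e i) (br (map alpha (take i (map (TT l) ys)) @ [br (map (TT l) xs @ [map (TT l) ys ! i])] @ map alpha (drop (Suc i) (map (TT l) ys))))"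
        unfolding claim3'[OF l1] using i hy by (simp add: claim3'[OF l2] mapTT take_map drop_map cmp)
    qed
    have "TT l (L l) = TT l (R l)"
      unfolding TL TR e_def
      by (rule jac) (use hx hy in \<open>auto simp: homog_map_TT\<close>)
    then have "TT l (J l) = 0" unfolding J_def klin_minus[OF TT_lin] by simp
    then show "J l + scale l (N (J l)) = 0" unfolding TT_def .
  qed
  have "J l = 0" by (rule polyf_T_zero[OF NL pJ TJ])
  then show ?thesis unfolding J_def L_def R_def e_def by simp
qed

lemma main: "n_hom_lie_color scale G n (LB l) eps alpha"
  using H unfolding n_hom_lie_color_def
  using LB_ml LB_deg LB_skew LB_jac by blast

end

theorem theorem6p3:
  fixes scale :: "'k::field_char_0 \<Rightarrow> 'v::ab_group_add \<Rightarrow> 'v"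
    and G :: "'g::ab_group_add \<Rightarrow> 'v set"
    and n :: nat
    and br :: "'v list \<Rightarrow> 'v"
    and eps :: "'g \<Rightarrow> 'g \<Rightarrow> 'k"
    and alpha N :: "'v \<Rightarrow> 'v"
  assumes "n \<ge> 2"
    and "n_hom_lie_color scale G n br eps alpha"
    and "k_linear scale N" and "degree_zero_map G N"
    and "nijenhuis n br alpha N"
  shows "\<forall>lam :: 'k.
     n_hom_lie_color scale G n (lambda_bracket scale n br N lam) eps alpha \<and>
     (\<forall>x. alpha x + scale lam (N (alpha x)) = alpha (x + scale lam (N x))) \<and>
     (\<forall>xs. length xs = n \<longrightarrow>
        lambda_bracket scale n br N lam xs + scale lam (N (lambda_bracket scale n br N lam xs))
          = br (map (\<lambda>x. x + scale lam (N x)) xs))"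
proof
  fix lam :: 'k
  interpret NIJ scale G n br eps alpha N
    by (unfold_locales) (use assms in auto)
  show "n_hom_lie_color scale G n (lambda_bracket scale n br N lam) eps alpha \<and>
     (\<forall>x. alpha x + scale lam (N (alpha x)) = alpha (x + scale lam (N x))) \<and>
     (\<forall>xs. length xs = n \<longrightarrow>
        lambda_bracket scale n br N lam xs + scale lam (N (lambda_bracket scale n br N lam xs))
          = br (map (\<lambda>x. x + scale lam (N x)) xs))"
    using main TT_alpha claim3 by blast
qed

end
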